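(* Let $m\ge2$ and $\Omega_{\mathbb{J}(2m)}=\sum_{j=1}^m(z_{2j-1}dz_{2j}-z_{2j}dz_{2j-1})$ on $\mathbb{C}^{2m}$. Then $\Omega_{\mathbb{J}(2m)}$ has no integral manifold through the origin.
   Context: An integral manifold of a holomorphic one-form $\Omega$ through a point $p$ is a germ at $p$ of an irreducible codimension one complex analytic subset $\Lambda$ whose regular part $\Lambda^*=\Lambda\setminus\operatorname{sing}(\Lambda)$ satisfies $T\Lambda^*\subset\operatorname{Ker}(\Omega)|_{\Lambda^*}$. *)

theory Defs
  imports "HOL-Analysis.Analysis"
begin

definition cholo_on :: "(complex ^ 'n) set \<Rightarrow> (complex ^ 'n \<Rightarrow> complex) \<Rightarrow> bool" where
  "cholo_on V f \<longleftrightarrow> (\<forall>x\<in>V. \<exists>L. (f has_derivative L) (at x) \<and>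
       (\<forall>v. L (\<i> *s v) = \<i> * L v))"

definition analytic_in :: "(complex ^ 'n) set \<Rightarrow> (complex ^ 'n) set \<Rightarrow> bool" where
  "analytic_in U A \<longleftrightarrow> open U \<and> A \<subseteq> U \<and>
     (\<forall>x\<in>U. \<exists>V. open V \<and> x \<in> V \<and> V \<subseteq> U \<and>
        (\<exists>(k::nat) f. (\<forall>i<k. cholo_on V (f i)) \<and> A \<inter> V = {z\<in>V. \<forall>i<k. f i z = 0}))"

definition germ_eq :: "'a::topological_space \<Rightarrow> 'a set \<Rightarrow> 'a set \<Rightarrow> bool" where
  "germ_eq p B C \<longleftrightarrow> (\<exists>W. open W \<and> p \<in> W \<and> B \<inter> W = C \<inter> W)"

definition irreducible_germ :: "complex ^ 'n \<Rightarrow> (complex ^ 'n) set \<Rightarrow> (complex ^ 'n) set \<Rightarrow> bool" where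
  "irreducible_germ p U A \<longleftrightarrow> p \<in> A \<and>
     (\<forall>V A1 A2. open V \<and> p \<in> V \<and> V \<subseteq> U \<and> analytic_in V A1 \<and> analytic_in V A2 \<and>
        A \<inter> V = A1 \<union> A2 \<longrightarrow> germ_eq p A1 A \<or> germ_eq p A2 A)"

definition regular_pt_dim :: "(complex ^ 'n) set \<Rightarrow> complex ^ 'n \<Rightarrow> nat \<Rightarrow> bool" where
  "regular_pt_dim A x d \<longleftrightarrow> x \<in> A \<and> d \<le> CARD('n) \<and>
     (\<exists>W g. open W \<and> x \<in> W \<and> (\<forall>i < CARD('n) - d. cholo_on W (g i)) \<and>
        (\<forall>y\<in>W. \<exists>L. (\<forall>i < CARD('n) - d. (g i has_derivative L i) (at y)) \<and>
            (\<forall>c::nat \<Rightarrow> complex. (\<forall>v. (\<Sum>i < CARD('n) - d. c i * L i v) = 0)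
                 \<longrightarrow> (\<forall>i < CARD('n) - d. c i = 0))) \<and>
        A \<inter> W = {z\<in>W. \<forall>i < CARD('n) - d. g i z = 0})"

definition regular_pt :: "(complex ^ 'n) set \<Rightarrow> complex ^ 'n \<Rightarrow> bool" where
  "regular_pt A x \<longleftrightarrow> (\<exists>d. regular_pt_dim A x d)"

text \<open>Tangent vectors of A at x: velocities of curves in A through x
  (at regular points this is the tangent space of the manifold A*).\<close>
definition tangent_space :: "(complex ^ 'n) set \<Rightarrow> complex ^ 'n \<Rightarrow> (complex ^ 'n) set" where
  "tangent_space A x = {v. \<exists>\<gamma>::real \<Rightarrow> complex ^ 'n. \<gamma> 0 = x \<and>
       (\<gamma> has_vector_derivative v) (at 0) \<and> (\<forall>\<^sub>F t in nhds 0. \<gamma> t \<in> A)}"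

text \<open>A one-form Omega is given as Omega z v (linear in v). Integral manifold of
  Omega through p: germ at p of an irreducible codimension-one analytic set whose
  regular part is tangent to Ker Omega.\<close>
definition has_integral_manifold ::
  "(complex ^ 'n \<Rightarrow> complex ^ 'n \<Rightarrow> complex) \<Rightarrow> complex ^ 'n \<Rightarrow> bool" where
  "has_integral_manifold \<Omega> p \<longleftrightarrow>
     (\<exists>U A. open U \<and> p \<in> U \<and> analytic_in U A \<and> p \<in> A \<and> irreducible_germ p U A \<and>
        (\<forall>x d. regular_pt_dim A x d \<longrightarrow> d = CARD('n) - 1) \<and>
        (\<forall>x. regular_pt A x \<longrightarrow> tangent_space A x \<subseteq> {v. \<Omega> x v = 0}))"

text \<open>Omega_J(2m) on C^(2m), with coordinates indexed by 'm \<times> bool: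
  z_(2j-1) = z$(j,False), z_(2j) = z$(j,True).\<close>
definition omegaJ :: "complex ^ ('m::finite \<times> bool) \<Rightarrow> complex ^ ('m \<times> bool) \<Rightarrow> complex" where
  "omegaJ z v = (\<Sum>j\<in>UNIV. z $ (j, False) * v $ (j, True) - z $ (j, True) * v $ (j, False))"

end

theory Submission
  imports Defs "HOL-Complex_Analysis.Complex_Analysis"
begin


definition Df :: "(complex^'n \<Rightarrow> complex) \<Rightarrow> complex^'n \<Rightarrow> complex^'n \<Rightarrow> complex" where
  "Df f x = frechet_derivative f (at x)"

lemma scaleC_vec_decomp: "(c::complex) *s (v::complex^'n) = Re c *\<^sub>R v + Im c *\<^sub>R (\<i> *s v)"
proof -
  have c: "c = of_real (Re c) + \<i> * of_real (Im c)" by (simp add: complex_eq)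
  show ?thesis
    unfolding vec_eq_iff vector_scaleR_component vector_add_component vector_smult_component
    by (simp only: scaleR_conv_of_real) (subst c, simp add: algebra_simps)
qed

lemma cholo_D:
  assumes "cholo_on N f" "x \<in> N"
  shows "(f has_derivative Df f x) (at x)" "Df f x (c *s v) = c * Df f x v"
proof -
  obtain L where L: "(f has_derivative L) (at x)" "\<And>v. L (\<i> *s v) = \<i> * L v"
    using assms unfolding cholo_on_def by blast
  have eq: "L = Df f x" unfolding Df_def using L(1) by (rule frechet_derivative_at)
  show "(f has_derivative Df f x) (at x)" using L(1) eq by simp
  interpret bounded_linear L using L(1) by (rule has_derivative_bounded_linear)
  have "L (c *s v) = c * L v"
  proof -
    have c: "c = of_real (Re c) + \<i> * of_real (Im c)" by (simp add: complex_eq)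
    have "L (c *s v) = Re c *\<^sub>R L v + Im c *\<^sub>R (\<i> * L v)"
      by (subst scaleC_vec_decomp) (simp only: add scaleR L(2))
    also have "\<dots> = Re c * L v + Im c * (\<i> * L v)" by (simp add: scaleR_conv_of_real)
    also have "\<dots> = c * L v" by (subst (3) c) (simp add: algebra_simps)
    finally show ?thesis .
  qed
  then show "Df f x (c *s v) = c * Df f x v" using eq by simp
qed

lemma cholo_D_bl: "cholo_on N f \<Longrightarrow> x \<in> N \<Longrightarrow> bounded_linear (Df f x)"
  using cholo_D(1) has_derivative_bounded_linear by blast

lemma bl_scal: "bounded_linear (\<lambda>h::complex. h *s (v::complex^'n))"
proof -
  have "linear (\<lambda>h::complex. h *s (v::complex^'n))"
  proof (rule linearI)
    fix b c :: complex show "(b + c) *s v = b *s v + c *s v" by (simp add: vector_sadd_rdistrib)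
  next
    fix r :: real and b :: complex
    show "(r *\<^sub>R b) *s v = r *\<^sub>R (b *s v)"
      unfolding vec_eq_iff vector_scaleR_component vector_smult_component by simp
  qed
  then show ?thesis using linear_conv_bounded_linear by blast
qed

lemma line_deriv:
  assumes "cholo_on N f" "open N" "z + t0 *s v \<in> N"
  shows "((\<lambda>t. f (z + t *s v)) has_field_derivative Df f (z + t0 *s v) v) (at t0)"
proof -
  have d1: "((\<lambda>t::complex. z + t *s v) has_derivative (\<lambda>h. h *s v)) (at t0)"
    using has_derivative_add[OF has_derivative_const bounded_linear_imp_has_derivative[OF bl_scal]] by (simp only: add_0)
  have "((\<lambda>t. f (z + t *s v)) has_derivative (\<lambda>h. Df f (z + t0 *s v) (h *s v))) (at t0)"
    using has_derivative_compose[OF d1 cholo_D(1)[OF assms(1,3)]] .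
  moreover have "(\<lambda>h. Df f (z + t0 *s v) (h *s v)) = (*) (Df f (z + t0 *s v) v)"
    using cholo_D(2)[OF assms(1,3)] by (auto simp: mult.commute)
  ultimately show ?thesis unfolding has_field_derivative_def by simp
qed


lemma norm_smult_vec: "norm (c *s (v::complex^'n)) = norm c * norm v"
  unfolding norm_vec_def by (simp add: norm_mult L2_set_right_distrib)

lemma cholo_cont: "cholo_on N f \<Longrightarrow> continuous_on N f"
  by (meson cholo_D(1) continuous_at_imp_continuous_on has_derivative_continuous)

lemma cholo_subset: "cholo_on N f \<Longrightarrow> M \<subseteq> N \<Longrightarrow> cholo_on M f"
  unfolding cholo_on_def by blast

lemma cauchy_rep:
  assumes "cholo_on N f" "open N" "r > 0" "\<And>t. norm t \<le> r \<Longrightarrow> z + t *s v \<in> N"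
  shows "((\<lambda>t. f (z + t *s v) / t^2) has_contour_integral (2*complex_of_real pi*\<i> * Df f z v)) (circlepath 0 r)"
proof -
  let ?g = "\<lambda>t. f (z + t *s v)"
  have d: "(?g has_field_derivative Df f (z + t *s v) v) (at t)" if "norm t \<le> r" for t
    using line_deriv[OF assms(1,2) assms(4)[OF that]] .
  have cont: "continuous_on (cball 0 r) ?g"
  proof (intro continuous_at_imp_continuous_on ballI)
    fix t :: complex assume "t \<in> cball 0 r"
    then have "norm t \<le> r" by simp
    from DERIV_isCont[OF d[OF this]] show "isCont ?g t" .
  qed
  have hol: "?g holomorphic_on ball 0 r"
    unfolding holomorphic_on_def field_differentiable_def
  proof (intro ballI)
    fix t :: complex assume "t \<in> ball 0 r"
    then have "norm t \<le> r" by simp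
    from has_field_derivative_at_within[OF d[OF this]] show "\<exists>f'. (?g has_field_derivative f') (at t within ball 0 r)" by blast
  qed
  have "deriv ?g 0 = Df f z v"
    using d[of 0] \<open>r > 0\<close> by (simp add: DERIV_imp_deriv)
  then show ?thesis
    using Cauchy_has_contour_integral_higher_derivative_circlepath[OF cont hol, of 0 1] \<open>r>0\<close>
    by (simp add: mult.assoc power2_eq_square)
qed

lemma circ_bound:
  assumes "((\<lambda>t. g t / t^2) has_contour_integral (2*complex_of_real pi*\<i>*X)) (circlepath 0 r)"
    "r > 0" "B \<ge> 0" "\<And>t. norm t = r \<Longrightarrow> norm (g t) \<le> B"
  shows "norm X \<le> B / r"
proof -
  have "norm (2*complex_of_real pi*\<i>*X) \<le> (B / r^2) * (2*pi*r)"
  proof (rule has_contour_integral_bound_circlepath[OF assms(1)])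
    fix t :: complex assume "norm (t - 0) = r"
    then show "norm (g t / t^2) \<le> B / r^2"
      using assms(4)[of t] by (simp add: norm_divide norm_power divide_right_mono)
  qed (use assms in auto)
  then have "2*pi*norm X \<le> 2*pi*(B/r)"
    using \<open>r>0\<close> by (simp add: norm_mult power2_eq_square field_simps)
  then have "2*pi*norm X \<le> 2*pi*(B/r)" by simp
  moreover have "2*pi > 0" using pi_gt_zero by simp
  ultimately show ?thesis by (metis mult.assoc mult_le_cancel_left_pos)
qed

lemma Df_cont:
  assumes "cholo_on N f" "open N"
  shows "continuous_on N (\<lambda>z. Df f z v)"
  unfolding continuous_on_iff
proof (intro ballI allI impI)
  fix z0 \<epsilon> assume z0: "z0 \<in> N" and "(\<epsilon>::real) > 0"
  obtain e where e: "e > 0" "cball z0 e \<subseteq> N" using assms(2) z0 open_contains_cball by blast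
  define r where "r = e / (2 * (norm v + 1))"
  have "2 * (norm v + 1) > 0" by (simp add: add_nonneg_pos)
  then have r: "r > 0" using e unfolding r_def by (intro divide_pos_pos)
  have rv: "norm (t *s v) \<le> e/2" if "norm t \<le> r" for t
  proof -
    have "norm (t *s v) = norm t * norm v" by (rule norm_smult_vec)
    also have "\<dots> \<le> r * (norm v + 1)" using that r by (intro mult_mono) auto
    also have "\<dots> = e/2" unfolding r_def using \<open>2 * (norm v + 1) > 0\<close> by (simp add: field_simps)
    finally show ?thesis .
  qed
  have "uniformly_continuous_on (cball z0 e) f"
    by (intro compact_uniformly_continuous continuous_on_subset[OF cholo_cont[OF assms(1)] e(2)]) auto
  then obtain d where d: "d > 0" "\<And>x x'. x \<in> cball z0 e \<Longrightarrow> x' \<in> cball z0 e \<Longrightarrow> dist x' x < d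
      \<Longrightarrow> dist (f x') (f x) < \<epsilon> * r / 2"
    unfolding uniformly_continuous_on_def using \<open>\<epsilon>>0\<close> r
    by (metis divide_pos_pos mult_pos_pos zero_less_numeral)
  show "\<exists>\<delta>>0. \<forall>x'\<in>N. dist x' z0 < \<delta> \<longrightarrow> dist (Df f x' v) (Df f z0 v) < \<epsilon>"
  proof (intro exI[of _ "min d (e/2)"] conjI ballI impI)
    show "min d (e/2) > 0" using d e by simp
    fix z assume "z \<in> N" "dist z z0 < min d (e/2)"
    then have zd: "dist z z0 < d" "dist z z0 < e/2" by auto
    have inc: "z + t *s v \<in> cball z0 e" "z0 + t *s v \<in> cball z0 e" if "norm t \<le> r" for t
    proof -
      have "dist z0 (z + t *s v) \<le> dist z0 z + norm (t *s v)"
        by (metis dist_commute dist_norm dist_triangle_le add_diff_cancel_left' norm_minus_commute order_refl)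
      then show "z + t *s v \<in> cball z0 e" using rv[OF that] zd by (simp add: dist_commute)
      show "z0 + t *s v \<in> cball z0 e" using rv[OF that] e by (simp add: dist_norm)
    qed
    have i1: "((\<lambda>t. f (z + t *s v) / t^2) has_contour_integral (2*complex_of_real pi*\<i> * Df f z v)) (circlepath 0 r)"
      using cauchy_rep[OF assms r] inc e by blast
    have i2: "((\<lambda>t. f (z0 + t *s v) / t^2) has_contour_integral (2*complex_of_real pi*\<i> * Df f z0 v)) (circlepath 0 r)"
      using cauchy_rep[OF assms r] inc e by blast
    have "((\<lambda>t. (f (z + t *s v) - f (z0 + t *s v)) / t^2) has_contour_integral (2*complex_of_real pi*\<i> * (Df f z v - Df f z0 v))) (circlepath 0 r)"
      using has_contour_integral_diff[OF i1 i2] by (simp add: diff_divide_distrib right_diff_distrib)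
    then have "norm (Df f z v - Df f z0 v) \<le> (\<epsilon> * r / 2) / r"
    proof (rule circ_bound[OF _ r])
      show "\<epsilon> * r / 2 \<ge> 0" using \<open>\<epsilon>>0\<close> r by simp
      fix t :: complex assume "norm t = r"
      then have "dist (f (z + t *s v)) (f (z0 + t *s v)) < \<epsilon> * r / 2"
        using d(2)[OF inc(2) inc(1)] zd by (simp add: dist_norm)
      then show "norm (f (z + t *s v) - f (z0 + t *s v)) \<le> \<epsilon> * r / 2" by (simp add: dist_norm)
    qed
    also have "\<dots> < \<epsilon>" using r \<open>\<epsilon>>0\<close> by simp
    finally show "dist (Df f z v) (Df f z0 v) < \<epsilon>" by (simp add: dist_norm)
  qed
qed



definition DB :: "(complex^'n \<Rightarrow> complex) \<Rightarrow> complex^'n \<Rightarrow> (complex^'n) \<Rightarrow>\<^sub>L complex" where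
  "DB f q = Blinfun (Df f q)"

lemma DB_apply: "cholo_on N f \<Longrightarrow> q \<in> N \<Longrightarrow> blinfun_apply (DB f q) = Df f q"
  unfolding DB_def by (rule bounded_linear_Blinfun_apply) (rule cholo_D_bl)

lemma DB_cont:
  fixes f :: "complex^'n \<Rightarrow> complex"
  assumes "cholo_on N f" "open N"
  shows "continuous_on N (DB f)"
proof (rule continuous_on_blinfun_componentwise)
  fix i :: "complex^'n" assume "i \<in> Basis"
  show "continuous_on N (\<lambda>x. blinfun_apply (DB f x) i)"
    using Df_cont[OF assms, of i] by (rule continuous_on_eq) (simp add: DB_apply[OF assms(1)])
qed

lemma mv_est:
  assumes f: "cholo_on N f" and seg: "closed_segment p (p+h) \<subseteq> N"
    and B: "\<And>q. q \<in> closed_segment p (p+h) \<Longrightarrow> norm (DB f q - DB f p) \<le> \<epsilon>"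
  shows "norm (f (p+h) - f p - Df f p h) \<le> \<epsilon> * norm h"
proof -
  have pN: "p \<in> N" using seg by auto
  interpret L: bounded_linear "Df f p" using cholo_D_bl[OF f pN] .
  let ?g = "\<lambda>x. f x - Df f p x"
  have der: "(?g has_derivative (\<lambda>y. Df f x y - Df f p y)) (at x within closed_segment p (p+h))"
    if "x \<in> closed_segment p (p+h)" for x
  proof -
    have xN: "x \<in> N" using that seg by auto
    have "(Df f p has_derivative Df f p) (at x)"
      by (rule bounded_linear_imp_has_derivative) (rule L.bounded_linear)
    from has_derivative_diff[OF cholo_D(1)[OF f xN] this]
    show ?thesis by (rule has_derivative_at_withinI)
  qed
  have on: "onorm (\<lambda>y. Df f x y - Df f p y) \<le> \<epsilon>" if "x \<in> closed_segment p (p+h)" for x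
  proof -
    have "x \<in> N" using that seg by auto
    then have "(\<lambda>y. Df f x y - Df f p y) = blinfun_apply (DB f x - DB f p)"
      using pN by (auto simp: blinfun.diff_left DB_apply[OF f])
    then show ?thesis using B[OF that] by (simp add: norm_blinfun.rep_eq)
  qed
  have "norm (?g (p+h) - ?g p) \<le> \<epsilon> * norm (p + h - p)"
    by (rule differentiable_bound[OF convex_closed_segment der on]) auto
  moreover have "?g (p+h) - ?g p = f (p+h) - f p - Df f p h"
    by (simp add: L.add)
  ultimately show ?thesis by simp
qed

lemma scaleR_vec_c: "(r::real) *\<^sub>R (a::complex^'n) = complex_of_real r *s a"
  unfolding vec_eq_iff vector_scaleR_component vector_smult_component by (simp add: scaleR_conv_of_real)

lemma Dv_deriv:
  assumes f: "cholo_on N f" and N: "open N" and z0: "z0 \<in> N"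
    and e: "e > 0" "cball z0 e \<subseteq> N" and r_def: "r = e / (2 * (norm v + 1))"
  defines "L \<equiv> (\<lambda>h. contour_integral (circlepath 0 r) (\<lambda>t. Df f (z0 + t *s v) h / t^2) / (2*complex_of_real pi*\<i>))"
  shows "((\<lambda>z. Df f z v) has_derivative L) (at z0) \<and> (\<forall>w. L (\<i> *s w) = \<i> * L w)"
proof -
  have pos: "2 * (norm v + 1) > 0" by (simp add: add_nonneg_pos)
  then have r: "r > 0" using e unfolding r_def by (intro divide_pos_pos)
  have rv: "norm (t *s v) \<le> e/2" if "norm t \<le> r" for t
  proof -
    have "norm (t *s v) = norm t * norm v" by (rule norm_smult_vec)
    also have "\<dots> \<le> r * (norm v + 1)" using that r by (intro mult_mono) auto
    also have "\<dots> = e/2" unfolding r_def using pos by (simp add: field_simps)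
    finally show ?thesis .
  qed
  have inK: "y + t *s v \<in> cball z0 e" if "norm t \<le> r" "dist z0 y \<le> e/2" for t y
  proof -
    have "dist z0 (y + t *s v) \<le> dist z0 y + norm (t *s v)"
      by (metis dist_norm dist_triangle_le add_diff_cancel_left' norm_minus_commute order_refl)
    then show ?thesis using rv[OF that(1)] that(2) by simp
  qed
  have sph: "path_image (circlepath 0 r) = sphere 0 r" using r by (simp add: path_image_circlepath)
  define I where "I h = contour_integral (circlepath 0 r) (\<lambda>t. Df f (z0 + t *s v) h / t^2)" for h
  have HI: "((\<lambda>t. Df f (z0 + t *s v) h / t^2) has_contour_integral I h) (circlepath 0 r)" for h
    unfolding I_def
  proof (rule has_contour_integral_integral, rule contour_integrable_continuous_circlepath)
    have c1: "continuous_on (sphere 0 r) (\<lambda>t. z0 + t *s v)"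
      by (intro continuous_intros continuous_on_compose2[OF bounded_linear.continuous_on[OF bl_scal] continuous_on_id]) auto
    have "(\<lambda>t. z0 + t *s v) ` sphere 0 r \<subseteq> N"
      using inK[of _ z0] e r by (auto simp: dist_norm)
    then have "continuous_on (sphere 0 r) (\<lambda>t. Df f (z0 + t *s v) h)"
      by (intro continuous_on_compose2[OF Df_cont[OF f N] c1]) auto
    then show "continuous_on (path_image (circlepath 0 r)) (\<lambda>t. Df f (z0 + t *s v) h / t^2)"
      unfolding sph using r by (intro continuous_intros) auto
  qed
  have Dlin: "Df f (z0 + t *s v) (a + b) = Df f (z0 + t *s v) a + Df f (z0 + t *s v) b"
    "Df f (z0 + t *s v) (c *s a) = c * Df f (z0 + t *s v) a" if "norm t = r" for t a b c
  proof -
    have "z0 + t *s v \<in> N" using inK[of t z0] that e by (auto simp: dist_norm)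
    then show "Df f (z0 + t *s v) (a + b) = Df f (z0 + t *s v) a + Df f (z0 + t *s v) b"
      "Df f (z0 + t *s v) (c *s a) = c * Df f (z0 + t *s v) a"
      using cholo_D_bl[OF f] cholo_D(2)[OF f] by (auto simp: linear_simps)
  qed
  have Iadd: "I (a + b) = I a + I b" for a b
  proof -
    have "((\<lambda>t. Df f (z0 + t *s v) a / t^2 + Df f (z0 + t *s v) b / t^2) has_contour_integral (I a + I b)) (circlepath 0 r)"
      by (rule has_contour_integral_add[OF HI HI])
    then have "((\<lambda>t. Df f (z0 + t *s v) (a + b) / t^2) has_contour_integral (I a + I b)) (circlepath 0 r)"
      by (rule has_contour_integral_eq) (use r in \<open>auto simp: sph Dlin(1) add_divide_distrib\<close>)
    then show ?thesis using HI has_contour_integral_unique by blast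
  qed
  have Imul: "I (c *s a) = c * I a" for a c
  proof -
    have "((\<lambda>t. c * (Df f (z0 + t *s v) a / t^2)) has_contour_integral (c * I a)) (circlepath 0 r)"
      by (rule has_contour_integral_lmul[OF HI])
    then have "((\<lambda>t. Df f (z0 + t *s v) (c *s a) / t^2) has_contour_integral (c * I a)) (circlepath 0 r)"
      by (rule has_contour_integral_eq) (use r in \<open>auto simp: sph Dlin(2)\<close>)
    then show ?thesis using HI has_contour_integral_unique by blast
  qed
  have L_def: "L h = I h / (2*complex_of_real pi*\<i>)" for h unfolding L_def I_def ..
  have linL: "linear L"
  proof (rule linearI)
    show "L (a + b) = L a + L b" for a b by (simp add: L_def Iadd add_divide_distrib)
    show "L (c *\<^sub>R a) = c *\<^sub>R L a" for c a
      by (simp only: L_def scaleR_vec_c Imul) (simp add: scaleR_conv_of_real)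
  qed
  then have blL: "bounded_linear L" using linear_conv_bounded_linear by blast
  have LI: "I h = 2*complex_of_real pi*\<i> * L h" for h by (simp add: L_def)
  show ?thesis
  proof (intro conjI allI)
    show "L (\<i> *s w) = \<i> * L w" for w by (simp add: L_def Imul)
    show "((\<lambda>z. Df f z v) has_derivative L) (at z0)"
      unfolding has_derivative_at_alt
    proof (intro conjI blL allI impI)
      fix \<epsilon> :: real assume "\<epsilon> > 0"
      have "uniformly_continuous_on (cball z0 e) (DB f)"
        by (intro compact_uniformly_continuous continuous_on_subset[OF DB_cont[OF f N] e(2)]) auto
      then obtain d where d: "d > 0" "\<And>x x'. x \<in> cball z0 e \<Longrightarrow> x' \<in> cball z0 e \<Longrightarrow> dist x' x < d
          \<Longrightarrow> dist (DB f x') (DB f x) < \<epsilon> * r"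
        unfolding uniformly_continuous_on_def using \<open>\<epsilon>>0\<close> r by (metis mult_pos_pos)
      show "\<exists>d>0. \<forall>y. norm (y - z0) < d \<longrightarrow>
          norm (Df f y v - Df f z0 v - L (y - z0)) \<le> \<epsilon> * norm (y - z0)"
      proof (intro exI[of _ "min d (e/2)"] conjI allI impI)
        show "min d (e/2) > 0" using d e by simp
        fix y assume "norm (y - z0) < min d (e/2)"
        then have yd: "norm (y - z0) < d" "dist z0 y \<le> e/2" by (auto simp: dist_norm norm_minus_commute)
        let ?h = "y - z0"
        have i1: "((\<lambda>t. f (y + t *s v) / t^2) has_contour_integral (2*complex_of_real pi*\<i> * Df f y v)) (circlepath 0 r)"
          using cauchy_rep[OF f N r] inK yd e by blast
        have i2: "((\<lambda>t. f (z0 + t *s v) / t^2) has_contour_integral (2*complex_of_real pi*\<i> * Df f z0 v)) (circlepath 0 r)"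
          using cauchy_rep[OF f N r] inK[of _ z0] e by (force simp: dist_norm)
        have "((\<lambda>t. (f (y + t *s v) - f (z0 + t *s v) - Df f (z0 + t *s v) ?h) / t^2) has_contour_integral
               (2*complex_of_real pi*\<i> * (Df f y v - Df f z0 v - L ?h))) (circlepath 0 r)"
          using has_contour_integral_diff[OF has_contour_integral_diff[OF i1 i2] HI[of ?h]]
          by (simp add: diff_divide_distrib right_diff_distrib LI)
        then have "norm (Df f y v - Df f z0 v - L ?h) \<le> (\<epsilon> * r * norm ?h) / r"
        proof (rule circ_bound[OF _ r])
          show "\<epsilon> * r * norm ?h \<ge> 0" using \<open>\<epsilon>>0\<close> r by simp
          fix t :: complex assume t: "norm t = r"
          let ?p = "z0 + t *s v"
          have pK: "?p \<in> cball z0 e" using inK[of t z0] t e by (simp add: dist_norm)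
          have phK: "?p + ?h \<in> cball z0 e" using inK[of t y] t yd by (simp add: algebra_simps)
          have segK: "closed_segment ?p (?p + ?h) \<subseteq> cball z0 e"
            using pK phK by (simp add: closed_segment_subset convex_cball)
          have "norm (f (?p + ?h) - f ?p - Df f ?p ?h) \<le> (\<epsilon> * r) * norm ?h"
          proof (rule mv_est[OF f order_trans[OF segK e(2)]])
            fix q assume q: "q \<in> closed_segment ?p (?p + ?h)"
            have "dist q ?p \<le> dist ?p (?p + ?h)"
              using q by (metis dist_commute dist_in_closed_segment)
            moreover have "dist ?p (?p + ?h) = norm ?h" by (simp add: dist_norm norm_minus_commute)
            ultimately have "dist q ?p < d" using yd by linarith
            then have "dist (DB f q) (DB f ?p) < \<epsilon> * r" using d(2)[OF pK] q segK by blast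
            then show "norm (DB f q - DB f ?p) \<le> \<epsilon> * r" by (simp add: dist_norm)
          qed
          moreover have "?p + ?h = y + t *s v" by (simp add: algebra_simps)
          ultimately show "norm (f (y + t *s v) - f (z0 + t *s v) - Df f (z0 + t *s v) ?h) \<le> \<epsilon> * r * norm ?h"
            by simp
        qed
        also have "\<dots> = \<epsilon> * norm ?h" using r by simp
        finally show "norm (Df f y v - Df f z0 v - L ?h) \<le> \<epsilon> * norm ?h" .
      qed
    qed
  qed
qed


lemma Dv_holo:
  assumes f: "cholo_on N f" and N: "open N"
  shows "cholo_on N (\<lambda>z. Df f z v)"
  unfolding cholo_on_def
proof
  fix z0 assume z0: "z0 \<in> N"
  obtain e where e: "e > 0" "cball z0 e \<subseteq> N" using N z0 open_contains_cball by blast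
  show "\<exists>L. ((\<lambda>z. Df f z v) has_derivative L) (at z0) \<and> (\<forall>w. L (\<i> *s w) = \<i> * L w)"
    using Dv_deriv[OF f N z0 e refl] by blast
qed


lemma Df_eq: "(f has_derivative L) (at x) \<Longrightarrow> Df f x = L"
  unfolding Df_def by (rule frechet_derivative_at[symmetric])

lemma cholo_intro:
  assumes "\<And>x. x \<in> N \<Longrightarrow> (f has_derivative L x) (at x) \<and> (\<forall>v. L x (\<i> *s v) = \<i> * L x v)"
  shows "cholo_on N f"
  unfolding cholo_on_def using assms by blast

lemma cholo_const: "cholo_on N (\<lambda>z. c)"
  by (rule cholo_intro[where L="\<lambda>x h. 0"]) auto

lemma cholo_add: "cholo_on N f \<Longrightarrow> cholo_on N g \<Longrightarrow> cholo_on N (\<lambda>z. f z + g z)"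
  by (rule cholo_intro[where L="\<lambda>x h. Df f x h + Df g x h"])
     (auto intro!: has_derivative_add cholo_D(1) simp: cholo_D(2) algebra_simps)

lemma cholo_diff: "cholo_on N f \<Longrightarrow> cholo_on N g \<Longrightarrow> cholo_on N (\<lambda>z. f z - g z)"
  by (rule cholo_intro[where L="\<lambda>x h. Df f x h - Df g x h"])
     (auto intro!: has_derivative_diff cholo_D(1) simp: cholo_D(2) algebra_simps)

lemma cholo_mult: assumes "cholo_on N f" "cholo_on N g" shows "cholo_on N (\<lambda>z. f z * g z)"
proof (rule cholo_intro[where L="\<lambda>x h. f x * Df g x h + Df f x h * g x"], rule conjI)
  fix x assume x: "x \<in> N"
  show "((\<lambda>z. f z * g z) has_derivative (\<lambda>h. f x * Df g x h + Df f x h * g x)) (at x)"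
    by (rule has_derivative_mult[OF cholo_D(1)[OF assms(1) x] cholo_D(1)[OF assms(2) x]])
  show "\<forall>v. f x * Df g x (\<i> *s v) + Df f x (\<i> *s v) * g x = \<i> * (f x * Df g x v + Df f x v * g x)"
    using cholo_D(2)[OF assms(1) x] cholo_D(2)[OF assms(2) x] by (simp add: algebra_simps)
qed

lemma cholo_sum: assumes "\<And>i. i \<in> I \<Longrightarrow> cholo_on N (f i)" shows "cholo_on N (\<lambda>z. \<Sum>i\<in>I. f i z)"
proof (rule cholo_intro[where L="\<lambda>x h. \<Sum>i\<in>I. Df (f i) x h"], rule conjI)
  fix x assume x: "x \<in> N"
  show "((\<lambda>z. \<Sum>i\<in>I. f i z) has_derivative (\<lambda>h. \<Sum>i\<in>I. Df (f i) x h)) (at x)"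
    using assms x by (intro has_derivative_sum cholo_D(1))
  show "\<forall>v. (\<Sum>i\<in>I. Df (f i) x (\<i> *s v)) = \<i> * (\<Sum>i\<in>I. Df (f i) x v)"
  proof
    fix v
    show "(\<Sum>i\<in>I. Df (f i) x (\<i> *s v)) = \<i> * (\<Sum>i\<in>I. Df (f i) x v)"
      unfolding sum_distrib_left by (rule sum.cong) (simp, metis assms x cholo_D(2))
  qed
qed


lemma Df_sym:
  assumes g: "cholo_on N g" and N: "open N" and p: "p \<in> N"
  shows "Df (\<lambda>q. Df g q a) p b = Df (\<lambda>q. Df g q b) p a"
proof -
  obtain e where e: "e > 0" "cball p e \<subseteq> N" using N p open_contains_cball by blast
  define r where "r = e / (2 * (norm a + 1))"
  have pos: "2 * (norm a + 1) > 0" by (simp add: add_nonneg_pos)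
  then have r: "r > 0" using e unfolding r_def by (intro divide_pos_pos)
  have rv: "p + t *s a \<in> N" if "norm t \<le> r" for t
  proof -
    have "norm (t *s a) = norm t * norm a" by (rule norm_smult_vec)
    also have "\<dots> \<le> r * (norm a + 1)" using that r by (intro mult_mono) auto
    also have "\<dots> = e/2" unfolding r_def using pos by (simp add: field_simps)
    finally have "dist p (p + t *s a) \<le> e" using e by (simp add: dist_norm)
    then show ?thesis using e by auto
  qed
  have "Df (\<lambda>q. Df g q a) p = (\<lambda>h. contour_integral (circlepath 0 r) (\<lambda>t. Df g (p + t *s a) h / t^2) / (2*complex_of_real pi*\<i>))"
    using Dv_deriv[OF g N p e r_def] by (intro Df_eq) (elim conjE)
  moreover have "((\<lambda>t. Df g (p + t *s a) b / t^2) has_contour_integral (2*complex_of_real pi*\<i> * Df (\<lambda>q. Df g q b) p a)) (circlepath 0 r)"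
    by (rule cauchy_rep[OF Dv_holo[OF g N] N r rv])
  then have "contour_integral (circlepath 0 r) (\<lambda>t. Df g (p + t *s a) b / t^2) = 2*complex_of_real pi*\<i> * Df (\<lambda>q. Df g q b) p a"
    by (rule contour_integral_unique)
  ultimately show ?thesis by simp
qed

definition vholo :: "(complex^'n) set \<Rightarrow> (complex^'n \<Rightarrow> complex^'n) \<Rightarrow> bool" where
  "vholo N F \<longleftrightarrow> (\<forall>y\<in>N. \<exists>L. (F has_derivative L) (at y) \<and> (\<forall>w. L (\<i> *s w) = \<i> *s L w))"

lemma vholo_homog:
  assumes "bounded_linear L" "\<And>w. L (\<i> *s w) = \<i> *s L w"
  shows "L (c *s w) = c *s L w"
proof -
  interpret bounded_linear L by fact
  have c: "c = of_real (Re c) + \<i> * of_real (Im c)" by (simp add: complex_eq)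
  have "L (c *s w) = Re c *\<^sub>R L w + Im c *\<^sub>R (\<i> *s L w)"
    by (subst scaleC_vec_decomp) (simp only: add scaleR assms(2))
  also have "\<dots> = c *s L w" by (subst (3) c) (simp add: scaleR_vec_c vector_sadd_rdistrib vector_smult_assoc)
  finally show ?thesis .
qed

lemma vholo_comp:
  assumes f: "cholo_on M f" and F: "vholo N F" and sub: "F ` N \<subseteq> M"
  shows "cholo_on N (\<lambda>z. f (F z))"
  unfolding cholo_on_def
proof
  fix x assume x: "x \<in> N"
  obtain L where L: "(F has_derivative L) (at x)" "\<And>w. L (\<i> *s w) = \<i> *s L w"
    using F x unfolding vholo_def by blast
  have Fx: "F x \<in> M" using sub x by auto
  show "\<exists>L'. ((\<lambda>z. f (F z)) has_derivative L') (at x) \<and> (\<forall>v. L' (\<i> *s v) = \<i> * L' v)"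
    apply (rule exI[of _ "\<lambda>w. Df f (F x) (L w)"])
    using has_derivative_compose[OF L(1) cholo_D(1)[OF f Fx]] L(2) cholo_D(2)[OF f Fx] by simp
qed

lemma Df_comp:
  assumes f: "cholo_on M f" and L: "(F has_derivative L) (at x)" and Fx: "F x \<in> M"
  shows "Df (\<lambda>z. f (F z)) x = (\<lambda>w. Df f (F x) (L w))"
  using has_derivative_compose[OF L cholo_D(1)[OF f Fx]] by (rule Df_eq)

lemma vholo_nth:
  fixes F :: "complex^'n \<Rightarrow> complex^'n"
  assumes "vholo N F"
  shows "cholo_on N (\<lambda>z. F z $ j)"
  unfolding cholo_on_def
proof
  fix x assume x: "x \<in> N"
  obtain L where L: "(F has_derivative L) (at x)" "\<And>w. L (\<i> *s w) = \<i> *s L w"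
    using assms x unfolding vholo_def by blast
  have "((\<lambda>z. F z $ j) has_derivative (\<lambda>w. L w $ j)) (at x)"
    using has_derivative_compose[OF L(1) bounded_linear_imp_has_derivative[OF bounded_linear_vec_nth]] .
  then show "\<exists>L'. ((\<lambda>z. F z $ j) has_derivative L') (at x) \<and> (\<forall>v. L' (\<i> *s v) = \<i> * L' v)"
    using L(2) by (intro exI[of _ "\<lambda>w. L w $ j"]) simp
qed

lemma Df_nth:
  fixes F :: "complex^'n \<Rightarrow> complex^'n"
  assumes "(F has_derivative L) (at x)"
  shows "Df (\<lambda>z. F z $ j) x = (\<lambda>w. L w $ j)"
  using has_derivative_compose[OF assms bounded_linear_imp_has_derivative[OF bounded_linear_vec_nth]]
  by (rule Df_eq)



lemma dual_sum:
  fixes lf :: "complex^'n \<Rightarrow> complex" and r :: nat and u :: "nat \<Rightarrow> complex^'n"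
  assumes bl: "bounded_linear lf" and hom: "\<And>c v. lf (c *s v) = c * lf v"
    and i: "i < r" and d: "\<And>k. k < r \<Longrightarrow> lf (u k) = (if i = k then 1 else 0)"
  shows "lf (\<Sum>k<r. c k *s u k) = c i"
proof -
  have "lf (\<Sum>k<r. c k *s u k) = (\<Sum>k<r. lf (c k *s u k))"
    using linear_sum[OF bounded_linear.linear[OF bl]] by simp
  also have "\<dots> = (\<Sum>k<r. if k = i then c k else 0)"
    by (rule sum.cong) (auto simp: hom d)
  also have "\<dots> = c i" using i by (subst sum.delta) auto
  finally show ?thesis .
qed

lemma smult_sum_vec: "(c::complex) *s (\<Sum>i\<in>I. f i) = (\<Sum>i\<in>I. c *s (f i :: complex^'n))"
  by (simp add: vec_eq_iff sum_component sum_distrib_left)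

lemma straighten:
  fixes h :: "nat \<Rightarrow> complex^'n \<Rightarrow> complex" and u :: "nat \<Rightarrow> complex^'n" and r :: nat
  assumes W: "open W" "x \<in> W" and hol: "\<And>i. i < r \<Longrightarrow> cholo_on W (h i)"
    and dual: "\<And>i k. i < r \<Longrightarrow> k < r \<Longrightarrow> Df (h i) x (u k) = (if i = k then 1 else 0)"
    and \<Phi>_def: "\<Phi> = (\<lambda>z. z + (\<Sum>i<r. (h i z - Df (h i) x z) *s u i))"
  obtains U' V \<Psi> g' DP where "open U'" "U' \<subseteq> W" "x \<in> U'" "open V" "\<Phi> x \<in> V"
    "homeomorphism U' V \<Phi> \<Psi>"
    "\<And>y. y \<in> V \<Longrightarrow> (\<Psi> has_derivative g' y) (at y)"
    "\<And>y c w. y \<in> V \<Longrightarrow> g' y (c *s w) = c *s g' y w"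
    "\<And>z. z \<in> W \<Longrightarrow> (\<Phi> has_derivative DP z) (at z)"
    "\<And>z c w. z \<in> W \<Longrightarrow> DP z (c *s w) = c *s DP z w"
    "\<And>y b. y \<in> V \<Longrightarrow> DP (\<Psi> y) (g' y b) = b"
    "\<And>z i w. z \<in> W \<Longrightarrow> i < r \<Longrightarrow> Df (h i) x (DP z w) = Df (h i) z w"
    "\<And>z i. z \<in> W \<Longrightarrow> i < r \<Longrightarrow> Df (h i) x (\<Phi> z) = h i z"
    "g' (\<Phi> x) = id"
proof -
  let ?l = "\<lambda>i. Df (h i) x"
  have blx: "bounded_linear (?l i)" if "i < r" for i using cholo_D_bl[OF hol[OF that] W(2)] .
  have homx: "?l i (c *s v) = c * ?l i v" if "i < r" for i c v using cholo_D(2)[OF hol[OF that] W(2)] .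
  define DP where "DP z w = w + (\<Sum>i<r. (Df (h i) z w - ?l i w) *s u i)" for z w
  have derP: "(\<Phi> has_derivative DP z) (at z)" if z: "z \<in> W" for z
  proof -
    have "((\<lambda>z. (h i z - ?l i z) *s u i) has_derivative (\<lambda>w. (Df (h i) z w - ?l i w) *s u i)) (at z)"
      if i: "i \<in> {..<r}" for i
    proof -
      have "((\<lambda>z. h i z - ?l i z) has_derivative (\<lambda>w. Df (h i) z w - ?l i w)) (at z)"
        using i z by (intro has_derivative_diff cholo_D(1)[OF hol] bounded_linear_imp_has_derivative blx) auto
      from bounded_linear.has_derivative[OF bl_scal this] show ?thesis .
    qed
    then have "((\<lambda>z. \<Sum>i<r. (h i z - ?l i z) *s u i) has_derivative (\<lambda>w. \<Sum>i<r. (Df (h i) z w - ?l i w) *s u i)) (at z)"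
      by (rule has_derivative_sum)
    from has_derivative_add[OF has_derivative_ident this] show ?thesis
      unfolding \<Phi>_def DP_def by simp
  qed
  have blDP: "bounded_linear (DP z)" if "z \<in> W" for z using derP[OF that] has_derivative_bounded_linear by blast
  have homDP: "DP z (c *s w) = c *s DP z w" if z: "z \<in> W" for z c w
  proof -
    have "DP z (c *s w) = c *s w + (\<Sum>i<r. c *s ((Df (h i) z w - ?l i w) *s u i))"
      unfolding DP_def
      by (intro arg_cong2[where f="(+)"] refl sum.cong)
         (auto simp: cholo_D(2)[OF hol z] homx vector_smult_assoc right_diff_distrib)
    also have "\<dots> = c *s DP z w" unfolding DP_def by (simp add: smult_sum_vec vector_add_ldistrib)
    finally show ?thesis .
  qed
  have lDP: "?l i (DP z w) = Df (h i) z w" if z: "z \<in> W" and i: "i < r" for z i w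
  proof -
    interpret bounded_linear "?l i" using blx[OF i] .
    have "?l i (DP z w) = ?l i w + ?l i (\<Sum>k<r. (Df (h k) z w - ?l k w) *s u k)"
      unfolding DP_def by (simp add: add)
    also have "?l i (\<Sum>k<r. (Df (h k) z w - ?l k w) *s u k) = Df (h i) z w - ?l i w"
      by (rule dual_sum[OF blx[OF i] homx[OF i] i]) (simp add: dual i)
    finally show ?thesis by simp
  qed
  have lPhi: "?l i (\<Phi> z) = h i z" if z: "z \<in> W" and i: "i < r" for z i
  proof -
    interpret bounded_linear "?l i" using blx[OF i] .
    have "?l i (\<Phi> z) = ?l i z + ?l i (\<Sum>k<r. (h k z - ?l k z) *s u k)"
      unfolding \<Phi>_def by (simp add: add)
    also have "?l i (\<Sum>k<r. (h k z - ?l k z) *s u k) = h i z - ?l i z"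
      by (rule dual_sum[OF blx[OF i] homx[OF i] i]) (simp add: dual i)
    finally show ?thesis by simp
  qed
  have DPx: "DP x = id" unfolding DP_def by (auto simp: fun_eq_iff)
  define f' where "f' z = Blinfun (DP z)" for z
  have f'a: "blinfun_apply (f' z) = DP z" if "z \<in> W" for z
    unfolding f'_def using blDP[OF that] by (rule bounded_linear_Blinfun_apply)
  have derf: "(\<Phi> has_derivative blinfun_apply (f' z)) (at z)" if "z \<in> W" for z
    using derP[OF that] f'a[OF that] by simp
  have contf: "continuous_on W f'"
  proof (rule continuous_on_blinfun_componentwise)
    fix b :: "complex^'n" assume "b \<in> Basis"
    have "continuous_on W (\<lambda>z. b + (\<Sum>i<r. (Df (h i) z b - ?l i b) *s u i))"
      by (intro continuous_intros bounded_linear.continuous_on[OF bl_scal] Df_cont[OF hol W(1)]) auto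
    then show "continuous_on W (\<lambda>z. blinfun_apply (f' z) b)"
      by (rule continuous_on_eq) (simp add: f'a DP_def)
  qed
  have invf: "id_blinfun o\<^sub>L f' x = id_blinfun"
    by (rule blinfun_eqI) (simp add: f'a[OF W(2)] DPx)
  obtain U' V \<Psi> g' where U': "open U'" "U' \<subseteq> W" "x \<in> U'" "open V" "\<Phi> x \<in> V"
      "homeomorphism U' V \<Phi> \<Psi>"
      "\<And>y. y \<in> V \<Longrightarrow> (\<Psi> has_derivative g' y) (at y)"
      "\<And>y. y \<in> V \<Longrightarrow> g' y = inv (blinfun_apply (f' (\<Psi> y)))"
      "\<And>y. y \<in> V \<Longrightarrow> bij (blinfun_apply (f' (\<Psi> y)))"
    using inverse_function_theorem[OF W(1) derf contf W(2) invf] by blast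
  have PsiW: "\<Psi> y \<in> W" if "y \<in> V" for y
    using U'(6,2) that unfolding homeomorphism_def by blast
  have g'eq: "g' y = inv (DP (\<Psi> y))" "bij (DP (\<Psi> y))" if "y \<in> V" for y
    using U'(8,9)[OF that] f'a[OF PsiW[OF that]] by auto
  have DPg: "DP (\<Psi> y) (g' y b) = b" if "y \<in> V" for y b
    using g'eq[OF that] by (simp add: bij_is_surj surj_f_inv_f)
  have g'hom: "g' y (c *s w) = c *s g' y w" if y: "y \<in> V" for y c w
  proof -
    have "c *s w = DP (\<Psi> y) (c *s g' y w)"
      using homDP[OF PsiW[OF y]] DPg[OF y] by simp
    then have "g' y (c *s w) = inv (DP (\<Psi> y)) (DP (\<Psi> y) (c *s g' y w))"
      using g'eq[OF y] by simp
    also have "\<dots> = c *s g' y w" using g'eq(2)[OF y] by (simp add: bij_is_inj inv_f_f)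
    finally show ?thesis .
  qed
  have Psix: "\<Psi> (\<Phi> x) = x" using U'(6,3) unfolding homeomorphism_def by blast
  have g'x: "g' (\<Phi> x) = id"
    using g'eq(1)[OF U'(5)] Psix DPx by (simp add: inv_id)
  show ?thesis
    by (rule that[OF U'(1-7) g'hom derP homDP DPg lDP lPhi g'x]) auto
qed


lemma dual_bound:
  fixes lf :: "nat \<Rightarrow> complex^'n \<Rightarrow> complex" and r :: nat and u :: "nat \<Rightarrow> complex^'n"
  assumes bl: "\<And>i. i < r \<Longrightarrow> bounded_linear (lf i)"
    and hom: "\<And>i c v. i < r \<Longrightarrow> lf i (c *s v) = c * lf i v"
    and d: "\<And>i k. i < r \<Longrightarrow> k < r \<Longrightarrow> lf i (u k) = (if i = k then 1 else 0)"
  shows "r \<le> CARD('n)"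
proof -
  have inj: "inj_on u {..<r}"
  proof (rule inj_onI)
    fix i k assume "i \<in> {..<r}" "k \<in> {..<r}" "u i = u k"
    then show "i = k" using d[of i i] d[of i k] by (auto split: if_splits)
  qed
  let ?S = "u ` {..<r}"
  have ind: "vec.independent ?S"
  proof
    assume "vec.dependent ?S"
    then obtain c where c: "\<exists>v\<in>?S. c v \<noteq> 0" "(\<Sum>v\<in>?S. c v *s v) = 0"
      using vec.dependent_finite[of ?S] by auto
    then obtain i where i: "i < r" "c (u i) \<noteq> 0" by auto
    have "(\<Sum>v\<in>?S. c v *s v) = (\<Sum>k<r. c (u k) *s u k)"
      using sum.reindex[OF inj, of "\<lambda>v. c v *s v"] by simp
    then have "lf i (\<Sum>k<r. c (u k) *s u k) = 0"
      using c(2) linear_0[OF bounded_linear.linear[OF bl[OF i(1)]]] by simp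
    moreover have "lf i (\<Sum>k<r. c (u k) *s u k) = c (u i)"
      by (rule dual_sum[OF bl[OF i(1)] hom[OF i(1)] i(1)]) (simp add: d i)
    ultimately show False using i by simp
  qed
  have "card ?S \<le> vec.dim (UNIV :: (complex^'n) set)"
    by (rule vec.independent_card_le_dim[OF _ ind]) auto
  then show ?thesis using card_image[OF inj] by (simp add: card_cart_basis)
qed


definition RK :: "(complex^'n) set \<Rightarrow> (complex^'n) set \<Rightarrow> complex^'n \<Rightarrow> nat \<Rightarrow> bool" where
  "RK A V0 y r \<longleftrightarrow> (\<exists>W h u. open W \<and> y \<in> W \<and> W \<subseteq> V0 \<and> (\<forall>i<r. cholo_on W (h i)) \<and>
     (\<forall>i<r. \<forall>z\<in>A \<inter> W. h i z = 0) \<and>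
     (\<forall>i<r. \<forall>k<r. Df (h i) y (u k) = (if i = k then 1 else 0)))"

lemma RK_bound:
  fixes A :: "(complex^'n) set"
  shows "RK A V0 y r \<Longrightarrow> r \<le> CARD('n)"
  unfolding RK_def
proof (elim exE conjE)
  fix W h and u :: "nat \<Rightarrow> complex^'n"
  assume *: "y \<in> W" "\<forall>i<r. cholo_on W (h i)" "\<forall>i<r. \<forall>k<r. Df (h i) y (u k) = (if i = k then 1 else 0)"
  show "r \<le> CARD('n)"
    by (rule dual_bound[of r "\<lambda>i. Df (h i) y" u]) (use * in \<open>blast intro: cholo_D_bl cholo_D(2)\<close>)+
qed

lemma Df_lincomb:
  assumes "cholo_on N g" "\<And>i. i < r \<Longrightarrow> cholo_on N (h i)" "y \<in> N"
  shows "Df (\<lambda>z. g z - (\<Sum>i<r. \<mu> i * h i z)) y v = Df g y v - (\<Sum>i<r. \<mu> i * Df (h i) y v)"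
proof -
  have "((\<lambda>z. g z - (\<Sum>i<r. \<mu> i * h i z)) has_derivative (\<lambda>v. Df g y v - (\<Sum>i<r. \<mu> i * Df (h i) y v))) (at y)"
    using assms
    by (intro has_derivative_diff has_derivative_sum has_derivative_mult_right cholo_D(1)) auto
  then show ?thesis by (simp add: Df_eq)
qed

lemma cholo_lincomb:
  assumes "cholo_on N g" "\<And>i. i < r \<Longrightarrow> cholo_on N (h i)"
  shows "cholo_on N (\<lambda>z. g z - (\<Sum>i<r. \<mu> i * h i z))"
  using assms by (intro cholo_diff cholo_sum cholo_mult cholo_const) auto


lemma line_zero:
  fixes Gs :: "nat \<Rightarrow> complex^'n \<Rightarrow> complex"
  assumes hol: "\<And>m. cholo_on V (Gs m)" and suc: "\<And>m w. Gs (Suc m) w = Df (Gs m) w a"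
    and V: "open V" "ball w0 \<rho> \<subseteq> V" and z: "\<And>m. Gs m w0 = 0" and a: "norm a < \<rho>"
  shows "Gs 0 (w0 + a) = 0"
proof (cases "a = 0")
  case True then show ?thesis using z by simp
next
  case False
  then have na: "norm a > 0" by simp
  define R where "R = \<rho> / norm a"
  have R1: "1 < R" unfolding R_def using a na by simp
  define \<phi> where "\<phi> t = Gs 0 (w0 + t *s a)" for t :: complex
  have inS: "w0 + t *s a \<in> V" if "t \<in> ball 0 R" for t :: complex
  proof -
    have "norm (t *s a) = norm t * norm a" by (rule norm_smult_vec)
    also have "\<dots> < R * norm a" using that na by (simp add: mult_strict_right_mono)
    also have "\<dots> = \<rho>" unfolding R_def using na by simp
    finally show ?thesis using V(2) by (auto simp: dist_norm)
  qed
  have dm: "(deriv ^^ m) \<phi> t = Gs m (w0 + t *s a)" if "t \<in> ball 0 R" for m and t :: complex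
    using that
  proof (induction m arbitrary: t)
    case 0 then show ?case by (simp add: \<phi>_def)
  next
    case (Suc m)
    have "((\<lambda>t. Gs m (w0 + t *s a)) has_field_derivative Df (Gs m) (w0 + t *s a) a) (at t)"
      by (rule line_deriv[OF hol V(1) inS[OF Suc.prems]])
    then have "((deriv ^^ m) \<phi> has_field_derivative Df (Gs m) (w0 + t *s a) a) (at t)"
      by (rule has_field_derivative_transform_within_open[OF _ open_ball Suc.prems]) (simp add: Suc.IH)
    then show ?case by (simp add: DERIV_imp_deriv suc)
  qed
  have "\<phi> holomorphic_on ball 0 R"
    unfolding holomorphic_on_def field_differentiable_def
  proof
    fix t :: complex assume t: "t \<in> ball 0 R"
    have "(\<phi> has_field_derivative Df (Gs 0) (w0 + t *s a) a) (at t)"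
      unfolding \<phi>_def by (rule line_deriv[OF hol V(1) inS[OF t]])
    then show "\<exists>f'. (\<phi> has_field_derivative f') (at t within ball 0 R)"
      by (blast intro: has_field_derivative_at_within)
  qed
  moreover have "(deriv ^^ m) \<phi> 0 = 0" for m
    using dm[of 0 m] R1 z by simp
  ultimately have "\<phi> 1 = 0"
    using holomorphic_fun_eq_0_on_ball[of \<phi> 0 R 1] R1 by simp
  then show ?thesis by (simp add: \<phi>_def)
qed


lemma S1:
  fixes fs :: "nat \<Rightarrow> complex^'n \<Rightarrow> complex" and h :: "nat \<Rightarrow> complex^'n \<Rightarrow> complex"
    and u :: "nat \<Rightarrow> complex^'n" and r :: nat and A :: "(complex^'n) set"
  assumes V0: "open V0" and fs: "\<And>j. j < k \<Longrightarrow> cholo_on V0 (fs j)"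
    and AV0: "A \<inter> V0 = {z\<in>V0. \<forall>j<k. fs j z = 0}"
    and x: "x \<in> A" and W: "open W" "x \<in> W" "W \<subseteq> V0"
    and hol: "\<And>i. i < r \<Longrightarrow> cholo_on W (h i)"
    and van: "\<And>i z. i < r \<Longrightarrow> z \<in> A \<inter> W \<Longrightarrow> h i z = 0"
    and dual: "\<And>i k. i < r \<Longrightarrow> k < r \<Longrightarrow> Df (h i) x (u k) = (if i = k then 1 else 0)"
    and max: "\<And>y r'. y \<in> A \<inter> V0 \<Longrightarrow> RK A V0 y r' \<Longrightarrow> r' \<le> r"
  shows "\<exists>W''. open W'' \<and> x \<in> W'' \<and> W'' \<subseteq> W \<and> A \<inter> W'' = {z\<in>W''. \<forall>i<r. h i z = 0} \<and>
     (\<forall>y\<in>W''. \<forall>c. (\<forall>v. (\<Sum>i<r. c i * Df (h i) y v) = 0) \<longrightarrow> (\<forall>i<r. c i = 0))"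
proof -
  define \<Phi> where "\<Phi> = (\<lambda>z. z + (\<Sum>i<r. (h i z - Df (h i) x z) *s u i))"
  obtain U' V \<Psi> g' DP where U': "open U'" "U' \<subseteq> W" "x \<in> U'" "open V" "\<Phi> x \<in> V"
    and hm: "homeomorphism U' V \<Phi> \<Psi>"
    and dPsi: "\<And>y. y \<in> V \<Longrightarrow> (\<Psi> has_derivative g' y) (at y)"
    and g'hom: "\<And>y c w. y \<in> V \<Longrightarrow> g' y (c *s w) = c *s g' y w"
    and derP: "\<And>z. z \<in> W \<Longrightarrow> (\<Phi> has_derivative DP z) (at z)"
    and homDP: "\<And>z c w. z \<in> W \<Longrightarrow> DP z (c *s w) = c *s DP z w"
    and DPg: "\<And>y b. y \<in> V \<Longrightarrow> DP (\<Psi> y) (g' y b) = b"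
    and lDP: "\<And>z i w. z \<in> W \<Longrightarrow> i < r \<Longrightarrow> Df (h i) x (DP z w) = Df (h i) z w"
    and lPhi: "\<And>z i. z \<in> W \<Longrightarrow> i < r \<Longrightarrow> Df (h i) x (\<Phi> z) = h i z"
    and g'x: "g' (\<Phi> x) = id"
    using straighten[OF W(1,2) hol dual \<Phi>_def] by blast
  let ?l = "\<lambda>i. Df (h i) x"
  have blx: "bounded_linear (?l i)" if "i < r" for i using cholo_D_bl[OF hol[OF that] W(2)] .
  have homx: "?l i (c *s v) = c * ?l i v" if "i < r" for i c v using cholo_D(2)[OF hol[OF that] W(2)] .
  have PsiPhi: "\<Psi> (\<Phi> z) = z" if "z \<in> U'" for z using hm that unfolding homeomorphism_def by blast
  have PhiPsi: "\<Phi> (\<Psi> y) = y" if "y \<in> V" for y using hm that unfolding homeomorphism_def by blast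
  have PhiV: "\<Phi> z \<in> V" if "z \<in> U'" for z using hm that unfolding homeomorphism_def by blast
  have PsiU: "\<Psi> y \<in> U'" if "y \<in> V" for y using hm that unfolding homeomorphism_def by blast
  have contPhi: "continuous_on U' \<Phi>" using hm unfolding homeomorphism_def by blast
  have PsiW: "\<Psi> y \<in> W" if "y \<in> V" for y using PsiU[OF that] U'(2) by blast
  define E where "E = {a. \<forall>i<r. ?l i a = 0}"
  have hPsi: "h i (\<Psi> y) = ?l i y" if "y \<in> V" "i < r" for y i
    using lPhi[OF PsiW[OF that(1)] that(2)] PhiPsi[OF that(1)] by simp
  have PsiA: "y \<in> E" if "y \<in> V" "\<Psi> y \<in> A" for y
    unfolding E_def using hPsi[OF that(1)] van PsiW[OF that(1)] that(2) by auto
  have Dh: "Df (h i) (\<Psi> y) (g' y b) = ?l i b" if "y \<in> V" "i < r" for y i b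
    using lDP[OF PsiW[OF that(1)] that(2), of "g' y b"] DPg[OF that(1), of b] by simp
  have vPhi: "vholo U' \<Phi>"
    unfolding vholo_def using derP homDP U'(2) by blast
  have vPsi: "vholo V \<Psi>"
    unfolding vholo_def using dPsi g'hom by blast
  have Esub: "a - b \<in> E" if "a \<in> E" "b \<in> E" for a b
    using that unfolding E_def by (simp add: linear_diff[OF bounded_linear.linear[OF blx]])
  \<comment> \<open>KEY: maximality forces tangential derivatives of functions vanishing on the image of A to vanish\<close>
  have KEY: "Df G w1 a = 0"
    if N': "open N'" "N' \<subseteq> V" and G: "cholo_on N' G" and Gz: "\<And>w. w \<in> N' \<Longrightarrow> \<Psi> w \<in> A \<Longrightarrow> G w = 0"
      and w1: "w1 \<in> N'" "\<Psi> w1 \<in> A" and a: "a \<in> E" for N' G w1 a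
  proof (rule ccontr)
    assume lam: "Df G w1 a \<noteq> 0"
    define y where "y = \<Psi> w1"
    have w1V: "w1 \<in> V" using w1 N' by auto
    define W' where "W' = U' \<inter> \<Phi> -` N'"
    have W'o: "open W'" unfolding W'_def by (rule continuous_open_preimage[OF contPhi U'(1) N'(1)])
    have yW': "y \<in> W'" unfolding W'_def y_def using PsiU[OF w1V] PhiPsi[OF w1V] w1 by auto
    have W'W: "W' \<subseteq> W" unfolding W'_def using U'(2) by auto
    have PhiN: "\<Phi> ` W' \<subseteq> N'" unfolding W'_def by auto
    define GP where "GP z = G (\<Phi> z)" for z
    have GPh: "cholo_on W' GP"
      unfolding GP_def by (rule vholo_comp[OF G _ PhiN]) (use vPhi W'_def in \<open>auto simp: vholo_def\<close>)
    have yW: "y \<in> W" using yW' W'W by auto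
    have Phiy: "\<Phi> y = w1" unfolding y_def using PhiPsi[OF w1V] .
    have DGP: "Df GP y (g' w1 b) = Df G w1 b" for b
    proof -
      have "Df GP y = (\<lambda>v. Df G (\<Phi> y) (DP y v))"
        unfolding GP_def by (rule Df_comp[OF G derP[OF yW]]) (simp add: Phiy w1)
      then show ?thesis using DPg[OF w1V] Phiy by (simp add: y_def)
    qed
    define lam0 where "lam0 = Df G w1 a"
    define \<mu> where "\<mu> i = Df GP y (g' w1 (u i))" for i
    define h' where "h' j = (if j < r then h j else (\<lambda>z. GP z - (\<Sum>i<r. \<mu> i * h i z)))" for j
    define u' where "u' j = (if j < r then g' w1 (u j) else (1/lam0) *s g' w1 a)" for j
    have holW': "cholo_on W' (h i)" if "i < r" for i using cholo_subset[OF hol[OF that] W'W] .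
    have Dhy: "Df (h i) y (c *s g' w1 b) = c * ?l i b" if "i < r" for i c b
      using cholo_D(2)[OF hol[OF that] yW] Dh[OF w1V that] by (simp add: y_def)
    have Dnew: "Df (h' r) y v = Df GP y v - (\<Sum>i<r. \<mu> i * Df (h i) y v)" for v
      unfolding h'_def by (simp add: Df_lincomb[OF GPh holW' yW'])
    have "RK A V0 y (Suc r)"
      unfolding RK_def
    proof (intro exI conjI allI impI ballI)
      show "open W'" "y \<in> W'" by fact+
      show "W' \<subseteq> V0" using W'W W(3) by auto
      fix i assume i: "i < Suc r"
      show "cholo_on W' (h' i)"
        using i holW' cholo_lincomb[OF GPh holW'] unfolding h'_def by (auto simp: less_Suc_eq)
      {
        fix z assume z: "z \<in> A \<inter> W'"
        have zU: "z \<in> U'" "\<Phi> z \<in> N'" using z unfolding W'_def by auto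
        have "G (\<Phi> z) = 0" using Gz[OF zU(2)] PsiPhi[OF zU(1)] z by auto
        moreover have "h j z = 0" if "j < r" for j using van[OF that] z W'W by auto
        ultimately show "h' i z = 0" using i unfolding h'_def GP_def by (auto simp: less_Suc_eq)
      }
      fix k assume k: "k < Suc r"
      show "Df (h' i) y (u' k) = (if i = k then 1 else 0)"
      proof (cases "i < r")
        case True
        then show ?thesis
        proof (cases "k < r")
          case True
          then show ?thesis using \<open>i < r\<close> Dh[OF w1V \<open>i<r\<close>, of "u k"] dual[OF \<open>i<r\<close> True]
            unfolding h'_def u'_def by (simp add: y_def)
        next
          case False
          then have "k = r" using k by simp
          then show ?thesis using \<open>i < r\<close> Dhy[OF \<open>i<r\<close>, of "1/lam0" a] a
            unfolding h'_def u'_def E_def by simp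
        qed
      next
        case False
        then have ir: "i = r" using i by simp
        show ?thesis
        proof (cases "k < r")
          case True
          have "(\<Sum>j<r. \<mu> j * Df (h j) y (g' w1 (u k))) = (\<Sum>j<r. if j = k then \<mu> j else 0)"
            by (rule sum.cong) (auto simp: Dh[OF w1V] y_def dual True)
          also have "\<dots> = \<mu> k" using True by (subst sum.delta) auto
          finally show ?thesis using True ir Dnew unfolding u'_def \<mu>_def by simp
        next
          case False
          then have kr: "k = r" using k by simp
          have "(\<Sum>j<r. \<mu> j * Df (h j) y ((1/lam0) *s g' w1 a)) = 0"
            by (rule sum.neutral) (use a in \<open>auto simp: Dhy E_def\<close>)
          moreover have "Df GP y ((1/lam0) *s g' w1 a) = 1"
            using cholo_D(2)[OF GPh yW'] DGP lam unfolding lam0_def by simp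
          ultimately show ?thesis using ir kr Dnew unfolding u'_def by simp
        qed
      qed
    qed
    moreover have "y \<in> A \<inter> V0" using w1 W(3) yW unfolding y_def by auto
    ultimately show False using max by fastforce
  qed
  \<comment> \<open>Identity principle along the leaf\<close>
  obtain \<rho> where \<rho>: "\<rho> > 0" "ball (\<Phi> x) \<rho> \<subseteq> V" using U'(4,5) open_contains_ball by blast
  have Psix: "\<Psi> (\<Phi> x) = x" using PsiPhi[OF U'(3)] .
  have w0E: "\<Phi> x \<in> E" using PsiA[OF U'(5)] Psix x by simp
  have zero: "fs j (\<Psi> w) = 0" if w: "w \<in> ball (\<Phi> x) \<rho>" "w \<in> E" and j: "j < k" for w j
  proof -
    define a where "a = w - \<Phi> x"
    have aE: "a \<in> E" unfolding a_def by (rule Esub[OF w(2) w0E])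
    have na: "norm a < \<rho>" using w(1) unfolding a_def by (simp add: dist_norm norm_minus_commute)
    define Gs where "Gs m = ((\<lambda>g w. Df g w a) ^^ m) (\<lambda>w. fs j (\<Psi> w))" for m
    have Gsuc: "Gs (Suc m) w = Df (Gs m) w a" for m w by (simp add: Gs_def)
    have "cholo_on V (Gs m) \<and> (\<forall>w\<in>V. \<Psi> w \<in> A \<longrightarrow> Gs m w = 0)" for m
    proof (induction m)
      case 0
      have "cholo_on V (\<lambda>w. fs j (\<Psi> w))"
        by (rule vholo_comp[OF fs[OF j] vPsi]) (use PsiW W(3) in auto)
      moreover have "fs j (\<Psi> w) = 0" if "w \<in> V" "\<Psi> w \<in> A" for w
        using AV0 PsiW[OF that(1)] W(3) that(2) j by auto
      ultimately show ?case by (simp add: Gs_def)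
    next
      case (Suc m)
      then have h1: "cholo_on V (Gs m)" and h2: "\<And>w. w \<in> V \<Longrightarrow> \<Psi> w \<in> A \<Longrightarrow> Gs m w = 0" by auto
      show ?case
        using Dv_holo[OF h1 U'(4), of a] KEY[OF U'(4) order_refl h1 h2 _ _ aE] by (auto simp: Gsuc)
    qed
    then have GsH: "cholo_on V (Gs m)" and Gs0: "\<And>w. w \<in> V \<Longrightarrow> \<Psi> w \<in> A \<Longrightarrow> Gs m w = 0" for m
      by auto
    have "Gs 0 (\<Phi> x + a) = 0"
    proof (rule line_zero[where Gs=Gs, OF GsH Gsuc U'(4) \<rho>(2)])
      show "Gs m (\<Phi> x) = 0" for m using Gs0[OF U'(5)] Psix x by simp
    qed (rule na)
    then show ?thesis by (simp add: Gs_def a_def)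
  qed
  define W'' where "W'' = U' \<inter> \<Phi> -` ball (\<Phi> x) \<rho>"
  show ?thesis
  proof (intro exI[of _ W''] conjI ballI allI impI)
    show "open W''" unfolding W''_def by (rule continuous_open_preimage[OF contPhi U'(1) open_ball])
    show "x \<in> W''" unfolding W''_def using U'(3) \<rho>(1) by auto
    show "W'' \<subseteq> W" unfolding W''_def using U'(2) by auto
    show "A \<inter> W'' = {z\<in>W''. \<forall>i<r. h i z = 0}"
    proof (intro set_eqI iffI)
      fix z assume "z \<in> A \<inter> W''"
      then show "z \<in> {z\<in>W''. \<forall>i<r. h i z = 0}" using van U'(2) unfolding W''_def by auto
    next
      fix z assume z: "z \<in> {z\<in>W''. \<forall>i<r. h i z = 0}"
      then have zU: "z \<in> U'" "\<Phi> z \<in> ball (\<Phi> x) \<rho>" unfolding W''_def by auto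
      have "\<Phi> z \<in> E" unfolding E_def using lPhi z U'(2) zU(1) by auto
      then have "\<forall>j<k. fs j (\<Psi> (\<Phi> z)) = 0" using zero zU by auto
      then have "z \<in> A \<inter> V0" using AV0 PsiPhi[OF zU(1)] zU(1) U'(2) W(3) by auto
      then show "z \<in> A \<inter> W''" using z by auto
    qed
    fix y c assume y: "y \<in> W''" and c: "\<forall>v. (\<Sum>i<r. c i * Df (h i) y v) = 0"
    fix i assume i: "i < r"
    have yU: "y \<in> U'" using y unfolding W''_def by auto
    have "(\<Sum>j<r. c j * Df (h j) y (g' (\<Phi> y) (u i))) = (\<Sum>j<r. if j = i then c j else 0)"
      by (rule sum.cong) (auto simp: Dh[OF PhiV[OF yU], unfolded PsiPhi[OF yU]] dual i)
    also have "\<dots> = c i" using i by (subst sum.delta) auto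
    finally show "c i = 0" using c by simp
  qed
qed


definition om :: "complex^('m::finite \<times> bool) \<Rightarrow> complex^('m \<times> bool) \<Rightarrow> complex" where
  "om a b = (\<Sum>l\<in>UNIV. a $ (l, False) * b $ (l, True) - a $ (l, True) * b $ (l, False))"

definition ev :: "'i::finite \<Rightarrow> complex^'i" where "ev p = (\<chi> i. if i = p then 1 else 0)"

lemma om_ev:
  "om (c1 *s ev p1 + c2 *s ev p2) (d1 *s ev q1 + d2 *s ev q2) =
   (\<Sum>l\<in>UNIV. ((if (l,False) = p1 then c1 else 0) + (if (l,False) = p2 then c2 else 0)) *
                ((if (l,True) = q1 then d1 else 0) + (if (l,True) = q2 then d2 else 0))
             - ((if (l,True) = p1 then c1 else 0) + (if (l,True) = p2 then c2 else 0)) *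
                ((if (l,False) = q1 then d1 else 0) + (if (l,False) = q2 then d2 else 0)))"
  unfolding om_def ev_def by (intro sum.cong) auto

lemma sum2:
  fixes f :: "'m::finite \<Rightarrow> complex"
  assumes "j \<noteq> k" "\<And>l. l \<noteq> j \<Longrightarrow> l \<noteq> k \<Longrightarrow> f l = 0"
  shows "(\<Sum>l\<in>UNIV. f l) = f j + f k"
proof -
  have "(\<Sum>l\<in>UNIV. f l) = (\<Sum>l\<in>{j,k}. f l)"
    by (rule sum.mono_neutral_right) (use assms in auto)
  also have "\<dots> = f j + f k" using assms(1) by simp
  finally show ?thesis .
qed

lemma ifmul: "(if P then (1::complex) else 0) * (if P then 1 else 0) = (if P then 1 else 0)" by simp

lemma LA:
  fixes lf :: "complex^('m::finite \<times> bool) \<Rightarrow> complex"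
  assumes bl: "bounded_linear lf" and hom: "\<And>c v. lf (c *s v) = c * lf v" and m: "CARD('m) \<ge> 2"
  shows "\<exists>a b. lf a = 0 \<and> lf b = 0 \<and> om a b \<noteq> 0"
proof -
  interpret bounded_linear lf by fact
  obtain j k :: 'm where jk: "j \<noteq> k"
  proof -
    have "\<not> (\<forall>j k::'m. j = k)"
    proof
      assume "\<forall>j k::'m. j = k"
      then have "card (UNIV::'m set) \<le> Suc 0" using card_le_Suc0_iff_eq[of "UNIV::'m set"] by simp
      then show False using m by simp
    qed
    then show ?thesis using that by blast
  qed
  define \<alpha> where "\<alpha> = lf (ev (j,False))"
  define \<beta> where "\<beta> = lf (ev (j,True))"
  define \<gamma> where "\<gamma> = lf (ev (k,False))"
  define \<delta> where "\<delta> = lf (ev (k,True))"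
  have lc: "lf (c1 *s ev p1 + c2 *s ev p2) = c1 * lf (ev p1) + c2 * lf (ev p2)" for c1 c2 p1 p2
    by (simp add: add hom)
  have s1: "(\<Sum>l\<in>UNIV. if l = j then X else (0::complex)) = X" for X by simp
  show ?thesis
  proof (cases "\<alpha> = 0 \<and> \<beta> = 0")
    case True
    have "om (1 *s ev (j,False) + 0 *s ev (j,False)) (1 *s ev (j,True) + 0 *s ev (j,True)) = 1"
      unfolding om_ev by (subst sum2[OF jk]) (use jk in auto)
    then show ?thesis using True lc[of 1 "(j,False)" 0 "(j,False)"] lc[of 1 "(j,True)" 0 "(j,True)"]
      unfolding \<alpha>_def \<beta>_def by (intro exI[of _ "1 *s ev (j,False) + 0 *s ev (j,False)"] exI[of _ "1 *s ev (j,True) + 0 *s ev (j,True)"]) simp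
  next
    case F1: False
    show ?thesis
    proof (cases "\<gamma> = 0 \<and> \<delta> = 0")
      case True
      have "om (1 *s ev (k,False) + 0 *s ev (k,False)) (1 *s ev (k,True) + 0 *s ev (k,True)) = 1"
        unfolding om_ev by (subst sum2[OF jk]) (use jk in auto)
      then show ?thesis using True lc[of 1 "(k,False)" 0 "(k,False)"] lc[of 1 "(k,True)" 0 "(k,True)"]
        unfolding \<gamma>_def \<delta>_def by (intro exI[of _ "1 *s ev (k,False) + 0 *s ev (k,False)"] exI[of _ "1 *s ev (k,True) + 0 *s ev (k,True)"]) simp
    next
      case F2: False
      show ?thesis
      proof (cases "\<alpha> \<noteq> 0 \<and> \<delta> \<noteq> 0")
        case True
        let ?a = "\<beta> *s ev (j,False) + (-\<alpha>) *s ev (j,True)"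
        let ?b = "\<delta> *s ev (j,False) + (-\<alpha>) *s ev (k,True)"
        have "om ?a ?b = \<alpha> * \<delta>" unfolding om_ev by (subst sum2[OF jk]) (use jk in auto)
        moreover have "lf ?a = 0" "lf ?b = 0" unfolding lc \<alpha>_def \<beta>_def \<delta>_def by (simp_all add: mult.commute)
        ultimately show ?thesis using True by (metis mult_eq_0_iff)
      next
        case F3: False
        show ?thesis
        proof (cases "\<beta> \<noteq> 0 \<and> \<gamma> \<noteq> 0")
          case True
          let ?a = "\<beta> *s ev (j,False) + (-\<alpha>) *s ev (j,True)"
          let ?b = "\<gamma> *s ev (j,True) + (-\<beta>) *s ev (k,False)"
          have "om ?a ?b = \<beta> * \<gamma>" unfolding om_ev by (subst sum2[OF jk]) (use jk in auto)
          moreover have "lf ?a = 0" "lf ?b = 0" unfolding lc \<alpha>_def \<beta>_def \<gamma>_def by (simp_all add: mult.commute)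
          ultimately show ?thesis using True by (metis mult_eq_0_iff)
        next
          case F4: False
          show ?thesis
          proof (cases "\<alpha> = 0")
            case True
            then have "\<beta> \<noteq> 0" "\<gamma> = 0" "\<delta> \<noteq> 0" using F1 F2 F4 by auto
            let ?a = "1 *s ev (j,False) + 0 *s ev (j,False)"
            let ?b = "\<delta> *s ev (j,True) + (-\<beta>) *s ev (k,True)"
            have "om ?a ?b = \<delta>" unfolding om_ev by (subst sum2[OF jk]) (use jk in auto)
            moreover have "lf ?a = 0" "lf ?b = 0" unfolding lc \<alpha>_def \<beta>_def \<delta>_def using True
              by (simp_all add: \<alpha>_def mult.commute)
            ultimately show ?thesis using \<open>\<delta> \<noteq> 0\<close> by metis
          next
            case False
            then have "\<delta> = 0" "\<beta> = 0" "\<gamma> \<noteq> 0" using F2 F3 F4 by auto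
            let ?a = "1 *s ev (j,True) + 0 *s ev (j,True)"
            let ?b = "\<gamma> *s ev (j,False) + (-\<alpha>) *s ev (k,False)"
            have "om ?a ?b = - \<gamma>" unfolding om_ev by (subst sum2[OF jk]) (use jk in auto)
            moreover have "lf ?a = 0" "lf ?b = 0" unfolding lc \<alpha>_def \<beta>_def \<gamma>_def using \<open>\<beta> = 0\<close>
              by (simp_all add: \<beta>_def mult.commute)
            ultimately show ?thesis using \<open>\<gamma> \<noteq> 0\<close> by (metis neg_equal_0_iff_equal)
          qed
        qed
      qed
    qed
  qed
qed


lemma S2:
  fixes h :: "complex^('m::finite \<times> bool) \<Rightarrow> complex" and A :: "(complex^('m \<times> bool)) set"
  assumes m: "CARD('m) \<ge> 2" and W: "open W" "x \<in> W" and x: "x \<in> A"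
    and hol: "cholo_on W h" and u: "Df h x u = 1"
    and AW: "A \<inter> W = {z\<in>W. h z = 0}"
    and tang: "\<And>y. y \<in> A \<inter> W \<Longrightarrow> tangent_space A y \<subseteq> {v. omegaJ y v = 0}"
  shows False
proof -
  define \<Phi> where "\<Phi> = (\<lambda>z. z + (\<Sum>i<(1::nat). (h z - Df h x z) *s u))"
  have dual1: "\<And>i k. i < (1::nat) \<Longrightarrow> k < 1 \<Longrightarrow> Df h x u = (if i = k then 1 else 0)" using u by simp
  obtain U' V \<Psi> g' DP where U': "open U'" "U' \<subseteq> W" "x \<in> U'" "open V" "\<Phi> x \<in> V"
    and hm: "homeomorphism U' V \<Phi> \<Psi>"
    and dPsi: "\<And>y. y \<in> V \<Longrightarrow> (\<Psi> has_derivative g' y) (at y)"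
    and g'hom: "\<And>y c w. y \<in> V \<Longrightarrow> g' y (c *s w) = c *s g' y w"
    and derP: "\<And>z. z \<in> W \<Longrightarrow> (\<Phi> has_derivative DP z) (at z)"
    and homDP: "\<And>z c w. z \<in> W \<Longrightarrow> DP z (c *s w) = c *s DP z w"
    and DPg: "\<And>y b. y \<in> V \<Longrightarrow> DP (\<Psi> y) (g' y b) = b"
    and lDP: "\<And>z i w. z \<in> W \<Longrightarrow> i < (1::nat) \<Longrightarrow> Df h x (DP z w) = Df h z w"
    and lPhi: "\<And>z i. z \<in> W \<Longrightarrow> i < (1::nat) \<Longrightarrow> Df h x (\<Phi> z) = h z"
    and g'x: "g' (\<Phi> x) = id"
    using straighten[of W x 1 "\<lambda>_. h" "\<lambda>_. u" \<Phi>, OF W hol dual1 \<Phi>_def] by blast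
  let ?l = "Df h x"
  have blx: "bounded_linear ?l" using cholo_D_bl[OF hol W(2)] .
  have homx: "?l (c *s v) = c * ?l v" for c v using cholo_D(2)[OF hol W(2)] .
  interpret L: bounded_linear ?l by (rule blx)
  have PsiPhi: "\<Psi> (\<Phi> z) = z" if "z \<in> U'" for z using hm that unfolding homeomorphism_def by blast
  have PhiPsi: "\<Phi> (\<Psi> y) = y" if "y \<in> V" for y using hm that unfolding homeomorphism_def by blast
  have PsiU: "\<Psi> y \<in> U'" if "y \<in> V" for y using hm that unfolding homeomorphism_def by blast
  have PsiW: "\<Psi> y \<in> W" if "y \<in> V" for y using PsiU[OF that] U'(2) by blast
  have hPsi: "h (\<Psi> y) = ?l y" if "y \<in> V" for y
    using lPhi[OF PsiW[OF that], of 0] PhiPsi[OF that] by simp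
  have vPsi: "vholo V \<Psi>" unfolding vholo_def using dPsi g'hom by blast
  obtain \<rho> where \<rho>: "\<rho> > 0" "ball (\<Phi> x) \<rho> \<subseteq> V" using U'(4,5) open_contains_ball by blast
  define w0 where "w0 = \<Phi> x"
  have w0V: "w0 \<in> V" using U'(5) w0_def by simp
  have Psiw0: "\<Psi> w0 = x" using PsiPhi[OF U'(3)] w0_def by simp
  have hx: "h x = 0" using x W(2) AW by auto
  have lw0: "?l w0 = 0" using hPsi[OF w0V] Psiw0 hx by simp
  have inA: "\<Psi> p \<in> A \<inter> W" if "p \<in> V" "?l p = 0" for p
    using AW PsiW[OF that(1)] hPsi[OF that(1)] that(2) by auto
  have TANG: "omegaJ (\<Psi> p) (g' p a) = 0" if p: "p \<in> ball w0 \<rho>" "?l p = 0" and a: "?l a = 0" for p a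
  proof -
    have pV: "p \<in> V" using p \<rho>(2) w0_def by auto
    have d1: "((\<lambda>t::real. p + t *\<^sub>R a) has_derivative (\<lambda>t. t *\<^sub>R a)) (at 0)"
      by (auto intro!: derivative_eq_intros)
    have "((\<lambda>t::real. \<Psi> (p + t *\<^sub>R a)) has_derivative (\<lambda>t. g' p (t *\<^sub>R a))) (at 0)"
      using has_derivative_compose[OF d1, of \<Psi> "g' p"] dPsi[OF pV] by simp
    moreover have "g' p (t *\<^sub>R a) = t *\<^sub>R g' p a" for t
    proof -
      interpret G: bounded_linear "g' p" using has_derivative_bounded_linear[OF dPsi[OF pV]] .
      show ?thesis by (rule G.scaleR)
    qed
    ultimately have vd: "((\<lambda>t::real. \<Psi> (p + t *\<^sub>R a)) has_vector_derivative g' p a) (at 0)"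
      unfolding has_vector_derivative_def by simp
    have "open {t::real. p + t *\<^sub>R a \<in> ball w0 \<rho>}"
      using continuous_open_vimage[of "ball w0 \<rho>" "\<lambda>t::real. p + t *\<^sub>R a"]
      by (auto intro!: continuous_intros simp: vimage_def)
    moreover have "0 \<in> {t::real. p + t *\<^sub>R a \<in> ball w0 \<rho>}" using p by simp
    ultimately have ev: "\<forall>\<^sub>F t in nhds 0. \<Psi> (p + t *\<^sub>R a) \<in> A"
    proof (rule eventually_nhds_in_open[THEN eventually_mono])
      fix t :: real assume "t \<in> {t. p + t *\<^sub>R a \<in> ball w0 \<rho>}"
      then have "p + t *\<^sub>R a \<in> V" using \<rho>(2) w0_def by auto
      moreover have "?l (p + t *\<^sub>R a) = 0" using p a by (simp add: L.add L.scaleR)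
      ultimately show "\<Psi> (p + t *\<^sub>R a) \<in> A" using inA by blast
    qed
    have "g' p a \<in> tangent_space A (\<Psi> p)"
      unfolding tangent_space_def using vd ev by (intro CollectI exI[of _ "\<lambda>t. \<Psi> (p + t *\<^sub>R a)"]) simp
    then show ?thesis using tang[OF inA[OF pV p(2)]] by auto
  qed
  define Pc where "Pc j w = \<Psi> w $ j" for j w
  have Pch: "cholo_on V (Pc j)" for j unfolding Pc_def by (rule vholo_nth[OF vPsi])
  have DPc: "Df (Pc j) p v = g' p v $ j" if "p \<in> V" for j p v
    unfolding Pc_def using Df_nth[OF dPsi[OF that]] by simp
  define Da where "Da a j w = Df (Pc j) w a" for a j w
  have Dah: "cholo_on V (Da a j)" for a j unfolding Da_def by (rule Dv_holo[OF Pch U'(4)])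
  define S where "S a p = (\<Sum>l\<in>UNIV. Pc (l,False) p * Da a (l,True) p - Pc (l,True) p * Da a (l,False) p)" for a p
  have Sh: "cholo_on V (S a)" for a
    unfolding S_def by (intro cholo_sum cholo_diff cholo_mult Pch Dah)
  have Sdef: "S a p = omegaJ (\<Psi> p) (g' p a)" if "p \<in> V" for a p
    unfolding S_def omegaJ_def Da_def using DPc[OF that] by (simp add: Pc_def)
  have DS: "Df (S a) w0 b = 0" if a: "?l a = 0" and b: "?l b = 0" for a b
  proof -
    define R where "R = \<rho> / (norm b + 1)"
    have R: "R > 0" using \<rho> by (simp add: R_def add_nonneg_pos)
    have inb: "w0 + t *s b \<in> ball w0 \<rho>" if "t \<in> ball 0 R" for t :: complex
    proof -
      have "norm (t *s b) = norm t * norm b" by (rule norm_smult_vec)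
      also have "\<dots> \<le> norm t * (norm b + 1)" by (simp add: mult_left_mono)
      also have "\<dots> < R * (norm b + 1)" using that by (intro mult_strict_right_mono) (auto simp: add_nonneg_pos)
      also have "\<dots> = \<rho>"
      proof -
        have nb: "norm b + 1 \<noteq> 0" by (metis add_nonneg_pos norm_ge_zero order_less_irrefl zero_less_one)
        show ?thesis unfolding R_def using nb by simp
      qed
      finally show ?thesis by (simp add: dist_norm)
    qed
    have "((\<lambda>t. S a (w0 + t *s b)) has_field_derivative Df (S a) (w0 + 0 *s b) b) (at 0)"
      by (rule line_deriv[OF Sh U'(4)]) (simp add: w0V)
    moreover have "((\<lambda>t. S a (w0 + t *s b)) has_field_derivative 0) (at 0)"
    proof (rule has_field_derivative_transform_within_open[OF DERIV_const open_ball])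
      show "(0::complex) \<in> ball 0 R" using R by simp
      fix t :: complex assume t: "t \<in> ball 0 R"
      have "?l (w0 + t *s b) = 0" using lw0 b by (simp add: L.add homx)
      moreover have "w0 + t *s b \<in> V" using inb[OF t] \<rho>(2) w0_def by auto
      ultimately have "S a (w0 + t *s b) = omegaJ (\<Psi> (w0 + t *s b)) (g' (w0 + t *s b) a)"
        "omegaJ (\<Psi> (w0 + t *s b)) (g' (w0 + t *s b) a) = 0"
        using Sdef TANG[OF inb[OF t] _ a] by blast+
      then show "0 = S a (w0 + t *s b)" by simp
    qed
    ultimately have "Df (S a) (w0 + 0 *s b) b = 0" by (rule DERIV_unique)
    then show ?thesis by simp
  qed
  have g'w0: "g' w0 v = v" for v using g'x w0_def by simp
  have DPc0: "Df (Pc j) w0 v = v $ j" for j v using DPc[OF w0V] g'w0 by simp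
  have DSeq: "Df (S a) w0 b = (\<Sum>l\<in>UNIV.
      (Pc (l,False) w0 * Df (Da a (l,True)) w0 b + b $ (l,False) * a $ (l,True)) -
      (Pc (l,True) w0 * Df (Da a (l,False)) w0 b + b $ (l,True) * a $ (l,False)))" for a b
  proof -
    have "(S a has_derivative (\<lambda>v. \<Sum>l\<in>UNIV.
      (Pc (l,False) w0 * Df (Da a (l,True)) w0 v + Df (Pc (l,False)) w0 v * Da a (l,True) w0) -
      (Pc (l,True) w0 * Df (Da a (l,False)) w0 v + Df (Pc (l,True)) w0 v * Da a (l,False) w0))) (at w0)"
      unfolding S_def
      by (intro has_derivative_sum has_derivative_diff has_derivative_mult cholo_D(1)[OF Pch w0V] cholo_D(1)[OF Dah w0V])
    then show ?thesis by (simp add: Df_eq DPc0 Da_def)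
  qed
  have sym: "Df (Da a j) w0 b = Df (Da b j) w0 a" for a b j
    unfolding Da_def by (rule Df_sym[OF Pch U'(4) w0V])
  have isot: "om a b = 0" if a: "?l a = 0" and b: "?l b = 0" for a b
  proof -
    have "Df (S a) w0 b - Df (S b) w0 a = - 2 * om a b"
      unfolding DSeq om_def sum_subtractf[symmetric] sum_distrib_left
      by (rule sum.cong) (auto simp: sym[of b _ a] algebra_simps)
    then show ?thesis using DS[OF a b] DS[OF b a] by simp
  qed
  obtain a b where "?l a = 0" "?l b = 0" "om a b \<noteq> 0"
    using LA[OF blx homx m] by blast
  then show False using isot by blast
qed


theorem corollary2p6:
  assumes "CARD('m::finite) \<ge> 2"
  shows "\<not> has_integral_manifold (omegaJ :: complex ^ ('m \<times> bool) \<Rightarrow> _) 0"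
proof
  assume "has_integral_manifold (omegaJ :: complex ^ ('m \<times> bool) \<Rightarrow> _) 0"
  then obtain U and A :: "(complex^('m \<times> bool)) set" where
    U: "open U" "0 \<in> U" and an: "analytic_in U A" and A0: "0 \<in> A"
    and regdim: "\<And>x d. regular_pt_dim A x d \<Longrightarrow> d = CARD('m \<times> bool) - 1"
    and tang: "\<And>x. regular_pt A x \<Longrightarrow> tangent_space A x \<subseteq> {v. omegaJ x v = 0}"
    unfolding has_integral_manifold_def by blast
  have "\<forall>x\<in>U. \<exists>V. open V \<and> x \<in> V \<and> V \<subseteq> U \<and>
        (\<exists>(k::nat) f. (\<forall>i<k. cholo_on V (f i)) \<and> A \<inter> V = {z\<in>V. \<forall>i<k. f i z = 0})"
    using an unfolding analytic_in_def by (elim conjE)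
  then obtain V0 where V0: "open V0" "0 \<in> V0" "V0 \<subseteq> U"
    and ex: "\<exists>(k::nat) f. (\<forall>i<k. cholo_on V0 (f i)) \<and> A \<inter> V0 = {z\<in>V0. \<forall>i<k. f i z = 0}"
    using U(2) by (elim ballE exE conjE) auto
  then obtain k :: nat and fs :: "nat \<Rightarrow> complex^('m \<times> bool) \<Rightarrow> complex" where fs0: "\<forall>i<k. cholo_on V0 (fs i)" and AV0: "A \<inter> V0 = {z\<in>V0. \<forall>i<k. fs i z = 0}"
    by blast
  have fs: "\<And>i. i < k \<Longrightarrow> cholo_on V0 (fs i)" using fs0 by blast
  define n where "n = CARD('m \<times> bool)"
  have n4: "n \<ge> 4" using assms unfolding n_def by (simp add: card_prod)
  define Rs where "Rs = {r. \<exists>y\<in>A \<inter> V0. RK A V0 y r}"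
  have Rsb: "Rs \<subseteq> {..n}" unfolding Rs_def n_def using RK_bound by blast
  then have finR: "finite Rs" by (rule finite_subset) simp
  have "RK A V0 0 0" unfolding RK_def using V0 by blast
  then have "0 \<in> Rs" unfolding Rs_def using A0 V0(2) by blast
  define r0 where "r0 = Max Rs"
  have "r0 \<in> Rs" unfolding r0_def using finR \<open>0 \<in> Rs\<close> by (intro Max_in) auto
  then obtain y0 where y0: "y0 \<in> A \<inter> V0" "RK A V0 y0 r0" unfolding Rs_def by blast
  have max: "r' \<le> r0" if "y \<in> A \<inter> V0" "RK A V0 y r'" for y r'
    unfolding r0_def using finR that by (intro Max_ge) (auto simp: Rs_def)
  have r0n: "r0 \<le> n" using RK_bound[OF y0(2)] n_def by simp
  obtain W and h :: "nat \<Rightarrow> complex^('m \<times> bool) \<Rightarrow> complex" and u :: "nat \<Rightarrow> complex^('m \<times> bool)"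
    where W: "open W" "y0 \<in> W" "W \<subseteq> V0" and hol0: "\<forall>i<r0. cholo_on W (h i)"
    and van0: "\<forall>i<r0. \<forall>z\<in>A \<inter> W. h i z = 0"
    and dual0: "\<forall>i<r0. \<forall>k<r0. Df (h i) y0 (u k) = (if i = k then 1 else 0)"
    using y0(2) unfolding RK_def by (elim exE conjE) (rule that)
  have hol: "\<And>i. i < r0 \<Longrightarrow> cholo_on W (h i)" using hol0 by simp
  have van: "\<And>i z. i < r0 \<Longrightarrow> z \<in> A \<inter> W \<Longrightarrow> h i z = 0" using van0 by simp
  have dual: "\<And>i k. i < r0 \<Longrightarrow> k < r0 \<Longrightarrow> Df (h i) y0 (u k) = (if i = k then 1 else 0)" using dual0 by simp
  have y0A: "y0 \<in> A" using y0(1) by simp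
  have "\<exists>W''. open W'' \<and> y0 \<in> W'' \<and> W'' \<subseteq> W \<and> A \<inter> W'' = {z\<in>W''. \<forall>i<r0. h i z = 0} \<and>
     (\<forall>y\<in>W''. \<forall>c. (\<forall>v. (\<Sum>i<r0. c i * Df (h i) y v) = 0) \<longrightarrow> (\<forall>i<r0. c i = 0))"
    by (rule S1[OF V0(1) fs AV0 y0A W hol van dual max])
  then obtain W'' where W'': "open W''" "y0 \<in> W''" "W'' \<subseteq> W" "A \<inter> W'' = {z\<in>W''. \<forall>i<r0. h i z = 0}"
    and ind0: "\<forall>y\<in>W''. \<forall>c. (\<forall>v. (\<Sum>i<r0. c i * Df (h i) y v) = 0) \<longrightarrow> (\<forall>i<r0. c i = 0)"
    by (elim exE conjE)
  have reg: "regular_pt_dim A z (n - r0)" if z: "z \<in> A \<inter> W''" for z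
    unfolding regular_pt_dim_def
  proof (intro conjI exI[of _ W''] exI[of _ h])
    show "z \<in> A" using z by simp
    show "n - r0 \<le> CARD('m \<times> bool)" unfolding n_def by simp
    have eq: "CARD('m \<times> bool) - (n - r0) = r0" using r0n unfolding n_def by simp
    show "open W''" "z \<in> W''" using W'' z by auto
    show "\<forall>i<CARD('m \<times> bool) - (n - r0). cholo_on W'' (h i)"
      unfolding eq using hol cholo_subset W''(3) by blast
    show "A \<inter> W'' = {z \<in> W''. \<forall>i<CARD('m \<times> bool) - (n - r0). h i z = 0}"
      unfolding eq by (rule W''(4))
    show "\<forall>y\<in>W''. \<exists>L. (\<forall>i<CARD('m \<times> bool) - (n - r0). (h i has_derivative L i) (at y)) \<and>
        (\<forall>c. (\<forall>v. (\<Sum>i<CARD('m \<times> bool) - (n - r0). c i * L i v) = 0) \<longrightarrow>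
             (\<forall>i<CARD('m \<times> bool) - (n - r0). c i = 0))"
      unfolding eq
    proof
      fix y assume y: "y \<in> W''"
      show "\<exists>L. (\<forall>i<r0. (h i has_derivative L i) (at y)) \<and>
          (\<forall>c. (\<forall>v. (\<Sum>i<r0. c i * L i v) = 0) \<longrightarrow> (\<forall>i<r0. c i = 0))"
      proof (intro exI[of _ "\<lambda>i. Df (h i) y"] conjI allI impI)
        show "(h i has_derivative Df (h i) y) (at y)" if "i < r0" for i
          using cholo_D(1)[OF hol[OF that]] y W''(3) by blast
        show "c i = 0" if "\<forall>v. (\<Sum>i<r0. c i * Df (h i) y v) = 0" "i < r0" for c i
          using ind0 y that by blast
      qed
    qed
  qed
  have "n - r0 = n - 1" using regdim[OF reg] y0(1) W''(2) n_def by blast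
  then have r1: "r0 = 1" using r0n n4 by linarith
  show False
  proof (rule S2[OF assms W''(1,2) _ _ _ _ tang])
    show "y0 \<in> A" using y0 by simp
    show "cholo_on W'' (h 0)" using cholo_subset[OF hol[of 0] W''(3)] r1 by simp
    show "Df (h 0) y0 (u 0) = 1" using dual[of 0 0] r1 by simp
    show "A \<inter> W'' = {z \<in> W''. h 0 z = 0}" using W''(4) r1 by simp
    show "regular_pt A y" if "y \<in> A \<inter> W''" for y
      unfolding regular_pt_def using reg[OF that] by blast
  qed
qed


end
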